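(* The restricted wave cone $\Lambda'$ is dense in the wave cone $\Lambda$.
   Context: Let $n\ge2$, $\mathcal S_0^{n\times n}$ the trace-free symmetric $n\times n$ matrices, $Z:=\mathbb{R}\times\mathbb{R}^n\times\mathbb{R}^n\times\mathcal S_0^{n\times n}\times\mathbb{R}$ with elements $\bar z=(\bar\rho,\bar v,\bar m,\bar\sigma,\bar p)$. Define the $(n+2)\times(n+1)$ matrix $M_\Lambda(\bar z):=\begin{pmatrix}\bar\sigma+\bar p\,\mathrm{Id}&\bar v\\ \bar v^T&0\\ \bar m^T&\bar\rho\end{pmatrix}$, the wave cone $\Lambda:=\{\bar z\in Z:\ker M_\Lambda(\bar z)\neq\{0\},\ (\bar\rho,\bar v)\neq0\}$, and $\Lambda':=\{\bar z\in\Lambda:\ker M_\Lambda(\bar z)\cap(\mathbb{R}^n\times(\mathbb{R}\setminus\{0\}))\neq\emptyset\}$. *)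

theory Defs
  imports "HOL-Analysis.Analysis"
begin

text \<open>The space Z = R x R^n x R^n x S_0^{n x n} x R, realised inside the ambient
  Euclidean product space; the dimension n is CARD('n).\<close>

type_synonym 'n Zamb = "real \<times> (real^'n) \<times> (real^'n) \<times> (real^'n^'n) \<times> real"

definition Zset :: "'n::finite Zamb set" where
  "Zset = {(\<rho>, v, m, \<sigma>, p). transpose \<sigma> = \<sigma> \<and> (\<Sum>i\<in>UNIV. \<sigma> $ i $ i) = 0}"

text \<open>The (n+2) x (n+1) matrix M_Lambda(z) applied to a vector (x,t) in R^n x R:
  rows (sigma + p Id | v), (v^T | 0), (m^T | rho).\<close>

definition M_Lambda :: "'n::finite Zamb \<Rightarrow> (real^'n) \<times> real \<Rightarrow> (real^'n) \<times> real \<times> real" where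
  "M_Lambda z w = (case z of (\<rho>, v, m, \<sigma>, p) \<Rightarrow> case w of (x, t) \<Rightarrow>
     ((\<sigma> + p *\<^sub>R mat 1) *v x + t *\<^sub>R v, v \<bullet> x, m \<bullet> x + \<rho> * t))"

definition ker_M :: "'n::finite Zamb \<Rightarrow> ((real^'n) \<times> real) set" where
  "ker_M z = {w. M_Lambda z w = 0}"

definition wave_cone :: "'n::finite Zamb set" where
  "wave_cone = {z \<in> Zset. ker_M z \<noteq> {0} \<and> (fst z, fst (snd z)) \<noteq> 0}"

definition wave_cone' :: "'n::finite Zamb set" where
  "wave_cone' = {z \<in> wave_cone. ker_M z \<inter> (UNIV \<times> (UNIV - {0})) \<noteq> {}}"

end

theory Submission
  imports Defs
begin

lemma keyS:
  fixes v x :: "real^'n::finite"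
  assumes vx: "v \<bullet> x = 0" and x0: "x \<noteq> 0"
  defines "S \<equiv> ((\<chi> i. \<chi> j. -(v$i*x$j + x$i * v$j)/(x\<bullet>x)) :: real^'n^'n)"
  shows "S *v x = -v" "transpose S = S" "(\<Sum>i\<in>UNIV. S$i$i) = 0"
proof -
  have xx: "x \<bullet> x \<noteq> 0" using x0 by simp
  have vx': "(\<Sum>j\<in>UNIV. v$j * x$j) = 0" using vx by (simp add: inner_vec_def)
  have xx': "(\<Sum>j\<in>UNIV. x$j * x$j) = x \<bullet> x" by (simp add: inner_vec_def)
  show "S *v x = -v"
  proof (rule vec_eq_iff[THEN iffD2], rule allI)
    fix i
    have "(S *v x) $ i = (\<Sum>j\<in>UNIV. -(v$i*x$j + x$i * v$j)/(x\<bullet>x) * x$j)"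
      by (simp add: S_def matrix_vector_mult_def)
    also have "\<dots> = (\<Sum>j\<in>UNIV. (-1/(x\<bullet>x)) * (v$i * (x$j * x$j) + x$i * (v$j * x$j)))"
      by (rule sum.cong) (use xx in \<open>auto simp: field_simps\<close>)
    also have "\<dots> = (-1/(x\<bullet>x)) * (\<Sum>j\<in>UNIV. v$i * (x$j * x$j) + x$i * (v$j * x$j))"
      by (simp only: sum_distrib_left)
    also have "\<dots> = (-1/(x\<bullet>x)) * (v$i * (\<Sum>j\<in>UNIV. x$j * x$j) + x$i * (\<Sum>j\<in>UNIV. v$j * x$j))"
      by (simp only: sum.distrib sum_distrib_left)
    also have "\<dots> = - v$i" using xx vx' xx' by simp
    finally show "(S *v x) $ i = (-v) $ i" by simp
  qed
  show "transpose S = S" by (simp add: S_def transpose_def vec_eq_iff algebra_simps)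
  have "(\<Sum>i\<in>UNIV. S$i$i) = -2 * (\<Sum>i\<in>UNIV. v$i*x$i)/(x\<bullet>x)"
    by (simp add: S_def sum_divide_distrib[symmetric] sum_distrib_left sum_negf algebra_simps)
  then show "(\<Sum>i\<in>UNIV. S$i$i) = 0" using vx' by simp
qed

theorem lemma3p1:
  assumes "CARD('n::finite) \<ge> 2"
  shows "(wave_cone :: 'n Zamb set) \<subseteq> closure (wave_cone' :: 'n Zamb set)"
proof
  fix z :: "'n Zamb"
  assume zW: "z \<in> wave_cone"
  obtain \<rho> v m \<sigma> p where z: "z = (\<rho>, v, m, \<sigma>, p)" by (cases z) auto
  from zW z have sym: "transpose \<sigma> = \<sigma>" and tr: "(\<Sum>i\<in>UNIV. \<sigma> $ i $ i) = 0"
    and rv: "(\<rho>, v) \<noteq> 0" and kz: "ker_M z \<noteq> {0}"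
    by (auto simp: wave_cone_def Zset_def)
  have k0: "0 \<in> ker_M z" by (simp add: z ker_M_def M_Lambda_def zero_prod_def)
  with kz obtain x t where xt: "(x, t) \<in> ker_M z" "(x, t) \<noteq> 0" by auto
  show "z \<in> closure wave_cone'"
  proof (cases "t = 0")
    case False
    then have "z \<in> wave_cone'" using zW xt by (auto simp: wave_cone'_def)
    then show ?thesis by (rule closure_subset[THEN subsetD])
  next
    case True
    with xt have x0: "x \<noteq> 0" by (auto simp: zero_prod_def)
    from xt True z have e1: "(\<sigma> + p *\<^sub>R mat 1) *v x = 0" and vx: "v \<bullet> x = 0"
      and mx: "m \<bullet> x = 0"
      by (auto simp: ker_M_def M_Lambda_def zero_prod_def)
    define S where "S = ((\<chi> i. \<chi> j. -(v$i*x$j + x$i * v$j)/(x\<bullet>x)) :: real^'n^'n)"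
    note SS = keyS[OF vx x0, folded S_def]
    have xx: "x \<bullet> x \<noteq> 0" using x0 by simp
    define d :: "'n Zamb" where "d = (0, 0, -(\<rho>/(x\<bullet>x)) *\<^sub>R x, S, 0)"
    have mem: "z + e *\<^sub>R d \<in> wave_cone'" if e0: "e \<noteq> 0" for e
    proof -
      have zd: "z + e *\<^sub>R d = (\<rho>, v, m - (e*\<rho>/(x\<bullet>x)) *\<^sub>R x, \<sigma> + e *\<^sub>R S, p)"
        by (simp add: z d_def)
      have Z: "z + e *\<^sub>R d \<in> Zset"
        unfolding zd Zset_def using sym tr SS
        by (simp add: transpose_def vec_eq_iff sum.distrib sum_distrib_left[symmetric])
      have "(\<sigma> + e *\<^sub>R S + p *\<^sub>R mat 1) *v x = (\<sigma> + p *\<^sub>R mat 1) *v x + e *\<^sub>R (S *v x)"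
        by (simp add: matrix_vector_mult_add_rdistrib algebra_simps scaleR_matrix_vector_assoc)
      also have "\<dots> = - e *\<^sub>R v" using e1 SS by simp
      finally have A: "(\<sigma> + e *\<^sub>R S + p *\<^sub>R mat 1) *v x + e *\<^sub>R v = 0" by simp
      have B: "(m - (e*\<rho>/(x\<bullet>x)) *\<^sub>R x) \<bullet> x + \<rho> * e = 0"
        using mx xx by (simp add: inner_diff_left)
      have K: "(x, e) \<in> ker_M (z + e *\<^sub>R d)"
        unfolding zd ker_M_def M_Lambda_def using A B vx by (simp add: zero_prod_def)
      show ?thesis using Z K e0 rv x0 unfolding wave_cone'_def wave_cone_def
        by (auto simp: zd zero_prod_def)
    qed
    have lim: "(\<lambda>k. z + (1 / real (Suc k)) *\<^sub>R d) \<longlonglongrightarrow> z + 0 *\<^sub>R d"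
      by (intro tendsto_intros LIMSEQ_Suc[OF lim_1_over_n])
    show ?thesis
      unfolding closure_sequential
      by (rule exI[of _ "\<lambda>k. z + (1 / real (Suc k)) *\<^sub>R d"]) (use lim mem in auto)
  qed
qed

end
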